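(* Let $m \equiv 1 \pmod 4$ with $m > 1$, $n = 3^m - 1$, $v = (3^{(m-1)/2}+1)/2$ and $\delta = (3^{(m-1)/2}+13)/2$. Then $\gcd(v,n) = 1$, and, setting $T_{(0,1,m)}(v) = \{ vi \bmod n : i \in T_{(0,1,m)}\}$, we have $\{n-(\delta-1), \ldots, n-2, n-1\} \subseteq T_{(0,1,m)}(v)$.
   Context: For an integer $0 \le j \le n-1$ with $3$-adic expansion $j = \sum_{t=0}^{m-1} j_t 3^t$, $j_t \in \{0,1,2\}$, let $w_3(j) = \sum_{t=0}^{m-1} j_t$. For distinct $i_1,i_2 \in \{0,1,2,3\}$, $T_{(i_1,i_2,m)} = \{1 \le j \le n-1 : w_3(j) \equiv i_1 \text{ or } i_2 \pmod 4\}$. For an integer $b$, $b \bmod n$ is the unique $b_0 \in \{0,\ldots,n-1\}$ with $b \equiv b_0 \pmod n$. *)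

theory Defs
  imports Main
begin

fun w3 :: "nat \<Rightarrow> nat" where
  "w3 j = (if j = 0 then 0 else j mod 3 + w3 (j div 3))"

declare w3.simps[simp del]

definition T :: "nat \<Rightarrow> nat \<Rightarrow> nat \<Rightarrow> nat set" where
  "T i1 i2 m = {j. 1 \<le> j \<and> j \<le> 3 ^ m - 2 \<and> (w3 j mod 4 = i1 mod 4 \<or> w3 j mod 4 = i2 mod 4)}"

definition Tscaled :: "nat \<Rightarrow> nat \<Rightarrow> nat \<Rightarrow> nat \<Rightarrow> nat set" where
  "Tscaled i1 i2 m v = (\<lambda>i. (v * i) mod (3 ^ m - 1)) ` T i1 i2 m"

end

theory Submission imports Defs begin
lemma w3_step: "d < 3 \<Longrightarrow> w3 (3*y + d) = d + w3 y"
proof (cases "3*y+d = 0")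
  case True then show ?thesis by (simp add: w3.simps)
next
  case False
  assume "d < 3"
  then have a: "(3*y+d) mod 3 = d" "(3*y+d) div 3 = y" by auto
  have "w3 (3*y+d) = (3*y+d) mod 3 + w3 ((3*y+d) div 3)" using False by (subst w3.simps) (simp only: if_False)
  then show ?thesis unfolding a .
qed

lemma w3_mult3: "w3 (3*y) = w3 y"
  using w3_step[of 0 y] by simp

lemma w3_0: "w3 0 = 0" by (simp add: w3.simps)

lemma w3_concat: "y < 3^L \<Longrightarrow> w3 (x*3^L + y) = w3 x + w3 y"
proof (induction L arbitrary: y)
  case 0 then show ?case by (simp add: w3_0)
next
  case (Suc L)
  have y: "y = 3*(y div 3) + y mod 3" by simp
  have lt: "y div 3 < 3^L" using Suc.prems by auto
  have eq: "x*3^Suc L + y = 3*(x*3^L + y div 3) + y mod 3" by simp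
  have "w3 (x*3^Suc L + y) = y mod 3 + w3 (x*3^L + y div 3)"
    by (simp only: eq) (rule w3_step, simp)
  also have "\<dots> = y mod 3 + w3 x + w3 (y div 3)" using Suc.IH[OF lt] by simp
  also have "w3 y = y mod 3 + w3 (y div 3)" using w3_step[of "y mod 3" "y div 3"] y by simp
  ultimately show ?case by simp
qed

lemma w3_compl: "x < 3^L \<Longrightarrow> w3 (3^L - 1 - x) + w3 x = 2*L"
proof (induction L arbitrary: x)
  case 0 then show ?case by (simp add: w3_0)
next
  case (Suc L)
  have lt: "x div 3 < 3^L" using Suc.prems by auto
  have "x = 3*(x div 3) + x mod 3" by simp
  have "(3::nat)^L \<ge> 1" by simp
  have e: "3^Suc L - 1 - x = 3*(3^L - 1 - x div 3) + (2 - x mod 3)"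
    using lt by (simp add: algebra_simps)
  have "w3 (3^Suc L - 1 - x) = (2 - x mod 3) + w3 (3^L - 1 - x div 3)"
    unfolding e by (rule w3_step) simp
  moreover have "w3 x = x mod 3 + w3 (x div 3)" using w3_step[of "x mod 3" "x div 3"] by simp
  moreover have "x mod 3 \<le> 2" by simp
  moreover note Suc.IH[OF lt]
  ultimately show ?case by (simp only: mult_Suc_right) linarith
qed

lemma w3_mulq: "1 \<le> x \<Longrightarrow> x \<le> 3^L \<Longrightarrow> w3 (x * (3^L - 1)) = 2*L"
proof -
  assume a: "1 \<le> x" "x \<le> 3^L"
  have "x * (3^L - 1) = (x-1)*3^L + (3^L - 1 - (x-1))"
    using a by (simp add: algebra_simps diff_mult_distrib diff_mult_distrib2)
  moreover have "3^L - 1 - (x-1) < (3::nat)^L" using a by simp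
  ultimately have "w3 (x * (3^L - 1)) = w3 (x-1) + w3 (3^L - 1 - (x-1))"
    using w3_concat by simp
  also have "\<dots> = 2*L" using w3_compl[of "x-1" L] a by (simp add: add.commute)
  finally show ?thesis .
qed
lemma w3_small: "w3 1 = 1" "w3 2 = 2" "w3 3 = 1" "w3 4 = 2"
  by (simp_all add: w3.simps)

lemma memT:
  assumes "1 \<le> i" "i \<le> 3^m - 2" "w3 i mod 4 = 0 \<or> w3 i mod 4 = 1"
    "v*i = K*(3^m-1) + x" "x < 3^m - 1"
  shows "x \<in> Tscaled 0 1 m v"
proof -
  have "(v*i) mod (3^m-1) = x" using assms(4,5) by simp
  moreover have "i \<in> T 0 1 m" using assms(1-3) unfolding T_def by auto
  ultimately show ?thesis unfolding Tscaled_def by (metis image_eqI)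
qed

lemma modeq:
  fixes v i t K n :: nat
  assumes "int v * int i + int t = (int K + 1) * int n" "t \<le> n"
  shows "v*i = K*n + (n - t)"
proof -
  have "int (v*i) = int (K*n + (n - t))" using assms by (simp add: of_nat_diff algebra_simps)
  then show ?thesis by (simp only: of_nat_eq_iff)
qed

theorem lemma5:
  fixes m n v \<delta> :: nat
  assumes "m mod 4 = 1" and "m > 1"
    and "n = 3 ^ m - 1"
    and "v = (3 ^ ((m - 1) div 2) + 1) div 2"
    and "\<delta> = (3 ^ ((m - 1) div 2) + 13) div 2"
  shows "gcd v n = 1 \<and> {n - (\<delta> - 1) .. n - 1} \<subseteq> Tscaled 0 1 m v"
proof -
  define k where "k = m div 4"
  have mk: "m = 4*k+1" using assms(1) unfolding k_def by presburger
  have k1: "k \<ge> 1" using assms(2) mk by simp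
  have hk: "(m - 1) div 2 = 2*k" using mk by simp
  define q where "q = (3::nat)^(2*k)"
  have q8: "q mod 8 = 1"
  proof -
    have "q = 9^k" unfolding q_def by (simp add: power_mult)
    moreover have "(9::nat)^k mod 8 = (9 mod 8)^k mod 8" by (rule power_mod[symmetric])
    ultimately show ?thesis by simp
  qed
  define r where "r = q div 8"
  have hq: "q = 8*r+1" using q8 unfolding r_def by presburger
  have q9: "q \<ge> 9"
  proof -
    have "(3::nat)^2 \<le> 3^(2*k)" using k1 by (intro power_increasing) auto
    then show ?thesis unfolding q_def by simp
  qed
  have r1: "r \<ge> 1" using q9 hq by simp
  have p3m: "(3::nat)^m = 3*q*q" unfolding mk q_def
    by (simp add: power_add power_mult_distrib power_mult[symmetric] mult_2[symmetric] algebra_simps)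
     (simp add: power_add[symmetric])
  have qq: "q*q = (3::nat)^(2*(2*k))" unfolding q_def by (simp add: power_add[symmetric])
  have nv: "v = 4*r+1" using assms(4) hk hq q_def by simp
  have nd: "\<delta> = 4*r+7" using assms(5) hk hq q_def by simp
  have nn: "n = 192*r*r + 48*r + 2" using assms(3) p3m hq by (simp add: algebra_simps)
  have gcd1: "gcd v n = 1"
  proof -
    have "n = (48*r)*v + 2" using nn nv by (simp add: algebra_simps)
    then have "gcd v n = gcd v 2" by (metis gcd_add_mult)
    also have "\<dots> = gcd 2 ((2*r)*2 + 1)" using nv by (simp add: gcd.commute algebra_simps)
    also have "\<dots> = 1" by (simp only: gcd_add_mult) simp
    finally show ?thesis .
  qed
  have sub: "x \<in> Tscaled 0 1 m v" if hx: "x \<in> {n - (\<delta> - 1) .. n - 1}" for x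
  proof -
    define t where "t = n - x"
    have t1: "t \<ge> 1" and t2: "t \<le> 4*r+6" and xt: "x = n - t" and tn: "t \<le> n"
      using hx nd nn unfolding t_def by auto
    have xlt: "x < 3^m - 1" using xt t1 tn assms(3) by simp
    have n3: "3^m - 1 = n" using assms(3) by simp
    have m2: "3^m - 2 = n - 1" using assms(3) by simp
    consider (ev) s where "t = 2*s" | (od) "odd t" by (metis evenE)
    then show ?thesis
    proof cases
      case ev
      define i where "i = 3*(t*(q-1))"
      have s1: "s \<ge> 1" using ev t1 by simp
      have ii: "i = 24*r*t" unfolding i_def using hq by simp
      have eq: "v*i = (s-1)*n + (n - t)"
      proof (rule modeq[OF _ tn])
        have "int s \<ge> 1" using s1 by simp
        then show "int v * int i + int t = (int (s-1) + 1) * int n"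
          using ii nv nn ev by (simp add: of_nat_diff algebra_simps)
      qed
      have w: "w3 i mod 4 = 0"
      proof (cases "t \<le> q")
        case True
        have "w3 i = 2*(2*k)" unfolding i_def w3_mult3 using w3_mulq[of t "2*k"] True t1 q_def by simp
        then show ?thesis by simp
      next
        case False
        then have "t = q+1" using t2 hq r1 by simp
        then have "i = 3*(3^(2*(2*k)) - 1 - 0)" unfolding i_def qq[symmetric]
          by (simp add: algebra_simps)
        then have "w3 i = 2*(2*(2*k))" using w3_compl[of 0 "2*(2*k)"] w3_mult3 by (simp add: w3_0)
        then show ?thesis by simp
      qed
      show ?thesis
      proof (rule memT[where i=i and K="s-1"])
        show "1 \<le> i" using ii r1 t1 by simp
        have A: "i \<le> 24*r*(4*r+6)" unfolding ii using t2 by (intro mult_le_mono2)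
        have B: "24*r*(4*r+6) \<le> 192*r*r+48*r" using r1 by (simp add: algebra_simps)
        have "i \<le> 192*r*r+48*r" using order_trans[OF A B] .
        then show "i \<le> 3^m - 2" using m2 nn by simp
        show "w3 i mod 4 = 0 \<or> w3 i mod 4 = 1" using w by simp
        show "v*i = (s-1)*(3^m-1) + x" using eq n3 xt by simp
        show "x < 3^m - 1" by fact
      qed
    next
      case od
      consider (a) "t \<le> 4*r+1" | (b) e where "e = 1 \<or> e = 2" "t = 4*r+1+2*e"
      proof (cases "t \<le> 4*r+1")
        case False
        then have "t = 4*r+1+2*1 \<or> t = 4*r+1+2*2" using od t2 by presburger
        then show ?thesis using that by blast
      qed simp
      then show ?thesis
      proof cases
        case a
        define u where "u = (4*r+1-t) div 2"
        have tu: "t = 4*r+1-2*u" and u2: "u \<le> 2*r" using a od unfolding u_def by presburger+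
        define x0 where "x0 = 3*((2*u)*(q-1)) + 1"
        have x0v: "x0 = 48*r*u + 1" unfolding x0_def hq by simp
        have x0le: "x0 \<le> 96*r*r + 1" unfolding x0v using u2 by simp
        define i where "i = 3^m - 1 - x0"
        have x0n: "x0 < n" using x0le nn by simp
        have ix: "i + x0 = n" unfolding i_def using x0n n3 by simp
        have iv: "int i = 192*int r*int r + 48*int r + 1 - 48*int r*int u"
        proof -
          have "int i = int n - int x0" using ix by simp
          then show ?thesis using nn x0v by simp
        qed
        have eq: "v*i = (4*r-u)*n + (n - t)"
        proof (rule modeq[OF _ tn])
          have k1: "int (4*r-u) = 4*int r - int u" using u2 by simp
          have ti: "int t = 4*int r + 1 - 2*int u" using tu u2 by simp
          have vi: "int v = 4*int r + 1" using nv by simp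
          have ni: "int n = 192*int r*int r + 48*int r + 2" using nn by simp
          show "int v * int i + int t = (int (4*r-u) + 1) * int n"
            unfolding k1 ti vi ni iv by algebra
        qed
        have wc: "w3 i + w3 x0 = 2*m" unfolding i_def by (rule w3_compl) (use x0n n3 in simp)
        have wx: "w3 x0 = 1 + (if u = 0 then 0 else 2*(2*k))"
        proof -
          have "w3 x0 = 1 + w3 ((2*u)*(q-1))" unfolding x0_def by (subst w3_step) simp_all
          moreover have "u \<noteq> 0 \<Longrightarrow> w3 ((2*u)*(q-1)) = 2*(2*k)"
            unfolding q_def by (rule w3_mulq) (use u2 hq q_def in simp_all)
          ultimately show ?thesis by (simp add: w3_0)
        qed
        have w: "w3 i mod 4 = 1" using wc wx mk by (cases "u = 0") (simp_all, presburger+)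
        show ?thesis
        proof (rule memT[where i=i and K="4*r-u"])
          show "1 \<le> i" using ix x0le nn r1 by simp
          show "i \<le> 3^m - 2" using ix m2 x0v by simp
          show "w3 i mod 4 = 0 \<or> w3 i mod 4 = 1" using w by simp
          show "v*i = (4*r-u)*(3^m-1) + x" using eq n3 xt by simp
          show "x < 3^m - 1" by fact
        qed
      next
        case b
        define c where "c = 2*e"
        have c4: "2 \<le> c" "c \<le> 4" using b unfolding c_def by auto
        have cq: "c < q" using c4 q9 by simp
        define x0 where "x0 = 3*((q-c)*q + c)"
        have x0lt: "(q-c)*q + c < q*q"
        proof -
          have "(q-c)*q + c < (q-c)*q + c*q" using cq c4 by simp
          also have "\<dots> = ((q-c)+c)*q" by (simp add: add_mult_distrib)
          also have "\<dots> = q*q" using cq by simp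
          finally show ?thesis .
        qed
        have x0n: "x0 < n" using x0lt assms(3) p3m unfolding x0_def by simp
        define i where "i = 3^m - 1 - x0"
        have ix: "i + x0 = n" unfolding i_def using x0n n3 by simp
        have ix0: "int x0 = 3*((int q - int c)*int q + int c)" unfolding x0_def using cq by (simp add: of_nat_diff)
        have iv: "int i = 48*int e*int r - 1"
        proof -
          have "int i = int n - int x0" using ix by simp
          then show ?thesis using ix0 nn hq c_def by (simp add: algebra_simps)
        qed
        have eq: "v*i = (e-1)*n + (n - t)"
        proof (rule modeq[OF _ tn])
          have k1: "int (e-1) = int e - 1" using b by auto
          have ti: "int t = 4*int r + 1 + 2*int e" using b by simp
          have vi: "int v = 4*int r + 1" using nv by simp
          have ni: "int n = 192*int r*int r + 48*int r + 2" using nn by simp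
          show "int v * int i + int t = (int (e-1) + 1) * int n"
            unfolding k1 ti vi ni iv by algebra
        qed
        have wc: "w3 i + w3 x0 = 2*m" unfolding i_def by (rule w3_compl) (use x0n n3 in simp)
        have wx: "w3 x0 = 2*(2*k) + 1"
        proof -
          have "w3 x0 = w3 ((q-c)*3^(2*k) + c)" unfolding x0_def w3_mult3 q_def ..
          also have "\<dots> = w3 (q-c) + w3 c" by (rule w3_concat) (use cq q_def in simp)
          also have "w3 (q-c) + w3 (c-1) = 2*(2*k)"
          proof -
            have "q - c = 3^(2*k) - 1 - (c-1)" using c4 q_def by simp
            moreover have "c - 1 < 3^(2*k)" using cq q_def by simp
            ultimately show ?thesis using w3_compl by simp
          qed
          moreover have "w3 c = w3 (c-1) + 1" using b w3_small unfolding c_def by auto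
          ultimately show ?thesis by simp
        qed
        have w: "w3 i mod 4 = 1" using wc wx mk by presburger
        show ?thesis
        proof (rule memT[where i=i and K="e-1"])
          have "int e * int r \<ge> 1" using b r1 by auto
          then have "int i \<ge> 1" using iv by linarith
          then show "1 \<le> i" by simp
          have "x0 \<ge> 1" unfolding x0_def using c4 by simp
          then show "i \<le> 3^m - 2" using ix m2 by simp
          show "w3 i mod 4 = 0 \<or> w3 i mod 4 = 1" using w by simp
          show "v*i = (e-1)*(3^m-1) + x" using eq n3 xt by simp
          show "x < 3^m - 1" by fact
        qed
      qed
    qed
  qed
  show ?thesis using gcd1 sub by blast
qed

end
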